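(* Let $n\ge3$, $1\le k\le n$, $c_0>0$, and let $u\in C^2(\overline{\mathbb{R}^n_+})$ be positive with $\sigma_k(A^u)=2^k\binom nk$, $g_u\in\Gamma_k^+$ in $\overline{\mathbb{R}^n_+}$, $\mathcal{B}_k^{g_u}=c_0$ on $\partial\mathbb{R}^n_+$, and assume $u_{0,1}(x):=|x|^{2-n}u(x/|x|^2)$ extends to a positive function in $C^2(\overline{B_1^+})$. Then $\bar\lambda(x)<\infty$ for every $x\in\partial\mathbb{R}^n_+$.
   Context: $B_1^+=B_1\cap\mathbb{R}^n_+$. For $x\in\partial\mathbb{R}^n_+$, $\lambda>0$: $u_{x,\lambda}(y):=\big(\frac{\lambda}{|y-x|}\big)^{n-2}u\big(x+\frac{\lambda^2(y-x)}{|y-x|^2}\big)$, and $\bar\lambda(x):=\sup\{\mu>0: u_{x,\lambda}\le u \text{ in } \overline{\mathbb{R}^n_+}\setminus B_\lambda(x)\ \forall\,0<\lambda<\mu\}$. For positive $C^2$ $u$: $g_u=u^{4/(n-2)}|dx|^2$, $A^u=-\frac{2}{n-2}u^{-\frac{n+2}{n-2}}\nabla^2u+\frac{2n}{(n-2)^2}u^{-\frac{2n}{n-2}}\nabla u\otimes\nabla u-\frac{2}{(n-2)^2}u^{-\frac{2n}{n-2}}|\nabla u|^2I_n$; $\sigma_s$ is the $s$-th elementary symmetric function of eigenvalues; $\Gamma_k^+=\{\lambda:\sigma_1(\lambda)>0,\dots,\sigma_k(\lambda)>0\}$, $g_u\in\Gamma_k^+$ meaning eigenvalues of $A^u$ in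 $\Gamma_k^+$. On $\partial\mathbb{R}^n_+$: $h_{g_u}=-\frac{2}{n-2}u^{-\frac n{n-2}}\partial_{x_n}u$, $A^{\mathrm T}_{g_u}=((A^u)_{\alpha\beta})_{1\le\alpha,\beta\le n-1}$, $\mathcal{B}_k^{g_u}=\frac{(n-1)!}{(n-k)!(2k-1)!!}h_{g_u}^{2k-1}+\sum_{s=1}^{k-1}\frac{(n-1-s)!}{(n-k)!(2k-2s-1)!!}\sigma_s(A^{\mathrm T}_{g_u})h_{g_u}^{2k-2s-1}$. *)

theory Defs
  imports "HOL-Analysis.Analysis"
begin

text \<open>Points of R^n are vectors of type real^'n, n = CARD('n).  The distinguished
index e plays the role of the last coordinate x_n.\<close>

definition halfspace :: "'n::finite \<Rightarrow> (real^'n) set" where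
  "halfspace e = {x. x $ e \<ge> 0}"

definition bdry_halfspace :: "'n::finite \<Rightarrow> (real^'n) set" where
  "bdry_halfspace e = {x. x $ e = 0}"

definition C2_with :: "(real^'n::finite) set \<Rightarrow> (real^'n \<Rightarrow> real) \<Rightarrow> (real^'n \<Rightarrow> real^'n)
     \<Rightarrow> (real^'n \<Rightarrow> real^'n^'n) \<Rightarrow> bool" where
  "C2_with S u Du D2u \<longleftrightarrow>
     (\<forall>x\<in>S. (u has_derivative (\<lambda>h. Du x \<bullet> h)) (at x within S)) \<and>
     (\<forall>x\<in>S. (Du has_derivative (\<lambda>h. D2u x *v h)) (at x within S)) \<and>
     continuous_on S D2u"

definition C2_on :: "(real^'n::finite) set \<Rightarrow> (real^'n \<Rightarrow> real) \<Rightarrow> bool" where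
  "C2_on S u \<longleftrightarrow> (\<exists>Du D2u. C2_with S u Du D2u)"

definition det_on :: "'n set \<Rightarrow> ('n \<Rightarrow> 'n \<Rightarrow> real) \<Rightarrow> real" where
  "det_on I M = (\<Sum>p\<in>{p. p permutes I}. of_int (sign p) * (\<Prod>i\<in>I. M i (p i)))"

definition eigvals_on :: "'n set \<Rightarrow> ('n \<Rightarrow> 'n \<Rightarrow> real) \<Rightarrow> ('n \<Rightarrow> real) \<Rightarrow> bool" where
  "eigvals_on I M lam \<longleftrightarrow>
     (\<forall>t. det_on I (\<lambda>i j. (if i = j then t else 0) - M i j) = (\<Prod>i\<in>I. t - lam i))"

definition esym :: "'n set \<Rightarrow> nat \<Rightarrow> ('n \<Rightarrow> real) \<Rightarrow> real" where
  "esym I s lam = (\<Sum>J\<in>{J. J \<subseteq> I \<and> card J = s}. \<Prod>i\<in>J. lam i)"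

definition Gamma_plus :: "'n set \<Rightarrow> nat \<Rightarrow> ('n \<Rightarrow> real) \<Rightarrow> bool" where
  "Gamma_plus I k lam \<longleftrightarrow> (\<forall>s\<in>{1..k}. esym I s lam > 0)"

definition sigma_mat :: "'n set \<Rightarrow> nat \<Rightarrow> ('n \<Rightarrow> 'n \<Rightarrow> real) \<Rightarrow> real" where
  "sigma_mat I s M = esym I s (SOME lam. eigvals_on I M lam)"

definition in_Gamma_mat :: "'n set \<Rightarrow> nat \<Rightarrow> ('n \<Rightarrow> 'n \<Rightarrow> real) \<Rightarrow> bool" where
  "in_Gamma_mat I k M \<longleftrightarrow> Gamma_plus I k (SOME lam. eigvals_on I M lam)"

text \<open>The Schouten-type tensor A^u at a point, given u, grad u, Hessian u there.\<close>
definition Amat :: "real \<Rightarrow> real^'n::finite \<Rightarrow> real^'n^'n \<Rightarrow> 'n \<Rightarrow> 'n \<Rightarrow> real" where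
  "Amat uv g H i j =
     (let n = real CARD('n) in
       - 2 / (n - 2) * uv powr (- (n + 2) / (n - 2)) * H $ i $ j
       + 2 * n / (n - 2)^2 * uv powr (- 2 * n / (n - 2)) * g $ i * g $ j
       - 2 / (n - 2)^2 * uv powr (- 2 * n / (n - 2)) * (norm g)^2 * (if i = j then 1 else 0))"

text \<open>Mean curvature h on the boundary (e = normal index).\<close>
definition hmean :: "'n::finite \<Rightarrow> real \<Rightarrow> real^'n \<Rightarrow> real" where
  "hmean e uv g = (let n = real CARD('n) in - 2 / (n - 2) * uv powr (- n / (n - 2)) * g $ e)"

definition odd_dfact :: "nat \<Rightarrow> nat" where
  "odd_dfact m = (\<Prod>i\<in>{1..m}. 2 * i - 1)"

definition Bk :: "'n::finite \<Rightarrow> nat \<Rightarrow> real \<Rightarrow> real^'n \<Rightarrow> real^'n^'n \<Rightarrow> real" where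
  "Bk e k uv g H =
     (let n = CARD('n); h = hmean e uv g; AT = Amat uv g H in
       fact (n - 1) / (fact (n - k) * real (odd_dfact k)) * h ^ (2 * k - 1)
       + (\<Sum>s = 1..k - 1. fact (n - 1 - s) / (fact (n - k) * real (odd_dfact (k - s)))
            * sigma_mat (UNIV - {e}) s AT * h ^ (2 * k - 2 * s - 1)))"

definition kelvin :: "(real^'n::finite \<Rightarrow> real) \<Rightarrow> real^'n \<Rightarrow> real \<Rightarrow> real^'n \<Rightarrow> real" where
  "kelvin u x lam y = (lam / norm (y - x)) ^ (CARD('n) - 2)
        * u (x + (lam^2 / (norm (y - x))^2) *\<^sub>R (y - x))"

definition lambda_bar :: "'n::finite \<Rightarrow> (real^'n \<Rightarrow> real) \<Rightarrow> real^'n \<Rightarrow> ereal" where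
  "lambda_bar e u x = Sup (ereal ` {mu. mu > 0 \<and>
      (\<forall>lam. 0 < lam \<and> lam < mu \<longrightarrow>
         (\<forall>y \<in> halfspace e - ball x lam. kelvin u x lam y \<le> u y))})"

end

theory Submission
  imports Defs
begin

theorem lemma3p4:
  fixes e :: "'n::finite"
    and u :: "real^'n \<Rightarrow> real" and Du :: "real^'n \<Rightarrow> real^'n" and D2u :: "real^'n \<Rightarrow> real^'n^'n"
    and k :: nat and c0 :: real
  assumes n3: "CARD('n) \<ge> 3"
    and k: "1 \<le> k" "k \<le> CARD('n)"
    and c0: "c0 > 0"
    and C2: "C2_with (halfspace e) u Du D2u"
    and pos: "\<forall>x\<in>halfspace e. u x > 0"
    and eq: "\<forall>x\<in>halfspace e.
               sigma_mat UNIV k (Amat (u x) (Du x) (D2u x)) = 2 ^ k * real (CARD('n) choose k)"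
    and cone: "\<forall>x\<in>halfspace e. in_Gamma_mat UNIV k (Amat (u x) (Du x) (D2u x))"
    and bdry: "\<forall>x\<in>bdry_halfspace e. Bk e k (u x) (Du x) (D2u x) = c0"
    and ext: "\<exists>v. C2_on (cball 0 1 \<inter> halfspace e) v
               \<and> (\<forall>x\<in>cball 0 1 \<inter> halfspace e. v x > 0)
               \<and> (\<forall>x\<in>cball 0 1 \<inter> halfspace e - {0}.
                    v x = norm x powr (2 - real CARD('n)) * u ((1 / (norm x)^2) *\<^sub>R x))"
  shows "\<forall>x\<in>bdry_halfspace e. lambda_bar e u x < \<infinity>"
proof
  fix x assume xb: "x \<in> bdry_halfspace e"
  hence xe: "x $ e = 0" by (simp add: bdry_halfspace_def)
  hence xH: "x \<in> halfspace e" by (simp add: halfspace_def)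
  define S where "S = cball 0 1 \<inter> halfspace e"
  obtain v where vC2: "C2_on S v" and vpos: "\<forall>x\<in>S. v x > 0"
    and vdef: "\<forall>z\<in>S - {0}. v z = norm z powr (2 - real CARD('n)) * u ((1 / (norm z)^2) *\<^sub>R z)"
    using ext unfolding S_def by blast
  define N where "N = CARD('n) - 2"
  have N1: "N \<ge> 1" using n3 unfolding N_def by simp
  have rN: "real CARD('n) - 2 = real N" using n3 unfolding N_def by simp
  have zS0: "0 \<in> S" by (simp add: S_def halfspace_def)
  obtain Dv D2v where "C2_with S v Dv D2v" using vC2 unfolding C2_on_def by blast
  hence "(v has_derivative (\<lambda>h. Dv 0 \<bullet> h)) (at 0 within S)" using zS0 unfolding C2_with_def by blast
  hence "continuous (at 0 within S) v" by (rule has_derivative_continuous)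
  then obtain d2 where d2: "d2 > 0" "\<forall>z\<in>S. dist z 0 < d2 \<longrightarrow> dist (v z) (v 0) < 1"
    unfolding continuous_within_eps_delta by (meson zero_less_one)
  have "(u has_derivative (\<lambda>h. Du x \<bullet> h)) (at x within halfspace e)" using C2 xH unfolding C2_with_def by blast
  hence "continuous (at x within halfspace e) u" by (rule has_derivative_continuous)
  moreover have a: "u x > 0" using pos xH by blast
  ultimately obtain d1 where d1: "d1 > 0" "\<forall>z\<in>halfspace e. dist z x < d1 \<longrightarrow> dist (u z) (u x) < u x / 2"
    unfolding continuous_within_eps_delta by (meson half_gt_zero)
  define B where "B = v 0 + 1"
  have B: "B > 0" using vpos zS0 unfolding B_def by fastforce
  define lam where "lam = max 1 (2^(N+1) * B / u x + 1)"
  have lam1: "lam \<ge> 1" unfolding lam_def by simp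
  have lamN: "lam ^ N \<ge> lam" using lam1 N1
    by (metis One_nat_def power_increasing power_one_right)
  have "lam > 2^(N+1) * B / u x" unfolding lam_def by simp
  hence "lam * u x > 2^(N+1) * B" using a by (simp add: field_simps)
  hence key: "lam ^ N * u x / 2 > 2^N * B" proof -
    have "lam * u x \<le> lam ^ N * u x" using lamN a by (simp add: mult_right_mono)
    thus ?thesis using \<open>lam * u x > 2^(N+1) * B\<close> by simp
  qed
  show "lambda_bar e u x < \<infinity>"
  proof (rule ccontr)
    assume nf: "\<not> lambda_bar e u x < \<infinity>"
    define M where "M = {mu. mu > 0 \<and> (\<forall>la. 0 < la \<and> la < mu \<longrightarrow>
         (\<forall>y \<in> halfspace e - ball x la. kelvin u x la y \<le> u y))}"
    have "\<exists>mu\<in>M. mu > lam"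
    proof (rule ccontr)
      assume nm: "\<not> (\<exists>mu\<in>M. mu > lam)"
      have "Sup (ereal ` M) \<le> ereal lam"
      proof (rule Sup_least)
        fix w assume "w \<in> ereal ` M"
        then obtain m where "m \<in> M" "w = ereal m" by blast
        thus "w \<le> ereal lam" using nm by auto
      qed
      hence le: "lambda_bar e u x \<le> ereal lam" unfolding lambda_bar_def M_def by simp
      have "ereal lam < \<infinity>" by simp
      hence "lambda_bar e u x < \<infinity>" using le by (rule order.strict_trans1[rotated])
      thus False using nf by contradiction
    qed
    then obtain mu where "mu \<in> M" "mu > lam" by blast
    hence kel: "\<forall>y \<in> halfspace e - ball x lam. kelvin u x lam y \<le> u y"
      using lam1 unfolding M_def by auto
    define d where "d = axis e (1::real)"
    define t where "t = lam + lam^2/d1 + 2 * norm x + 2 + 2/d2 + 1"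
    have t0: "t > 0" using d1 d2 lam1 unfolding t_def by (smt (verit) divide_pos_pos norm_ge_zero zero_less_power)
    have tlam: "t \<ge> lam" "lam^2/d1 < t" "2 * norm x + 2 \<le> t" "2/d2 < t"
      using d1 d2 lam1 unfolding t_def by (smt (verit) divide_pos_pos norm_ge_zero zero_less_power)+
    define y where "y = x + t *\<^sub>R d"
    have ye: "y $ e = t" unfolding y_def d_def using xe by simp
    have yH: "y \<in> halfspace e" using ye t0 by (simp add: halfspace_def)
    have nyx: "norm (y - x) = t" unfolding y_def d_def using t0 by simp
    have yball: "y \<notin> ball x lam" using nyx tlam by (simp add: dist_norm norm_minus_commute)
    have ny: "norm y \<ge> t / 2"
    proof -
      have "t = norm (y - x)" using nyx by simp
      also have "\<dots> \<le> norm y + norm x" by (rule norm_triangle_ineq4)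
      finally show ?thesis using tlam by simp
    qed
    have ny1: "norm y \<ge> 1" using ny tlam norm_ge_zero[of x] by linarith
    have ny0: "norm y > 0" using ny1 by linarith
    have argeq: "x + (lam^2 / (norm (y - x))^2) *\<^sub>R (y - x) = x + (lam^2 / t) *\<^sub>R d"
      using nyx t0 unfolding y_def by (simp add: power2_eq_square)
    have "dist (x + (lam^2 / t) *\<^sub>R d) x = lam^2 / t" unfolding d_def using t0 by (simp add: dist_norm)
    also have "\<dots> < d1" using tlam d1 t0 by (simp add: field_simps)
    finally have "dist (x + (lam^2 / t) *\<^sub>R d) x < d1" .
    moreover have "x + (lam^2 / t) *\<^sub>R d \<in> halfspace e" using xe t0 lam1
      unfolding d_def halfspace_def by simp
    ultimately have "dist (u (x + (lam^2 / t) *\<^sub>R d)) (u x) < u x / 2" using d1 by blast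
    hence ulow: "u (x + (lam^2 / t) *\<^sub>R d) > u x / 2" unfolding dist_real_def by arith
    have kv: "kelvin u x lam y = (lam / t) ^ N * u (x + (lam^2 / t) *\<^sub>R d)"
      unfolding kelvin_def N_def using argeq nyx by simp
    have klow: "kelvin u x lam y > (lam / t) ^ N * (u x / 2)"
      unfolding kv using ulow lam1 t0 by (simp add: mult_strict_left_mono)
    define z where "z = (1 / (norm y)^2) *\<^sub>R y"
    have nz: "norm z = 1 / norm y" unfolding z_def using ny0 by (simp add: power2_eq_square)
    have zn1: "norm z \<le> 1" using nz ny1 by (simp add: divide_le_eq_1)
    have "z $ e = (1 / (norm y)^2) * t" unfolding z_def using ye by simp
    hence ze: "z $ e \<ge> 0" using t0 by simp
    have "z \<noteq> 0" using nz ny0 by auto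
    hence zS: "z \<in> S - {0}" using zn1 ze unfolding S_def halfspace_def by simp
    have zinv: "(1 / (norm z)^2) *\<^sub>R z = y" unfolding nz z_def using ny0 by (simp add: power2_eq_square)
    have "v z = (1 / norm y) powr (2 - real CARD('n)) * u y" using vdef zS zinv nz by simp
    also have "(1 / norm y) powr (2 - real CARD('n)) = norm y ^ N"
    proof -
      have "(1 / norm y) powr (2 - real CARD('n)) = norm y powr (real CARD('n) - 2)"
        using ny0 by (simp add: powr_divide powr_minus_divide[symmetric] powr_minus)
      also have "\<dots> = norm y ^ N" using rN ny0 by (simp add: powr_realpow)
      finally show ?thesis .
    qed
    finally have vz: "v z = norm y ^ N * u y" .
    have "1 / norm y \<le> 1 / (t/2)" using ny t0 ny0 by (intro divide_left_mono) auto
    also have "\<dots> = 2 / t" by simp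
    also have "\<dots> < d2" using tlam(4) d2(1) t0 by (simp add: field_simps)
    finally have "dist z 0 < d2" using nz by simp
    hence "dist (v z) (v 0) < 1" using d2 zS by blast
    hence "v z < B" unfolding B_def unfolding dist_real_def by arith
    hence uup: "norm y ^ N * u y < B" using vz by simp
    have "(t/2) ^ N * u y \<le> norm y ^ N * u y"
      using ny t0 pos yH by (intro mult_right_mono power_mono) (auto simp: less_imp_le)
    hence uup2: "(t/2) ^ N * u y < B" using uup by linarith
    have "(lam / t) ^ N * (u x / 2) < u y" proof -
      have "kelvin u x lam y \<le> u y" using kel yH yball by blast
      thus ?thesis using klow by linarith
    qed
    hence "(t/2)^N * ((lam / t) ^ N * (u x / 2)) < (t/2)^N * u y" using t0 by simp
    hence "(t/2)^N * ((lam / t) ^ N * (u x / 2)) < B" using uup2 by linarith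
    moreover have "(t/2)^N * ((lam / t) ^ N * (u x / 2)) = lam ^ N * u x / 2 / 2^N"
      using t0 by (simp add: power_divide field_simps)
    ultimately have "lam ^ N * u x / 2 / 2^N < B" by metis
    hence "lam ^ N * u x / 2 < B * 2^N" by (simp add: pos_divide_less_eq)
    hence "lam ^ N * u x / 2 < 2^N * B" by (simp add: mult.commute)
    thus False using key by simp
  qed
qed

end
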